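(* Let $M$ be a Poisson manifold with a local star product $*$ and let $\omega:C^\infty_0(M)[[\lambda]]\to\mathbb C[[\lambda]]$ be a faithful positive $\mathbb C[[\lambda]]$-linear functional. Then $\operatorname{supp}\psi_f=\operatorname{supp}f$ for all $f\in C^\infty_0(M)[[\lambda]]$.
   Context: $C^\infty(M)$ denotes complex-valued smooth functions and $\lambda$ is a formal parameter. A (local) star product $*$ on $M$ is an associative $\mathbb C[[\lambda]]$-bilinear product on $C^\infty(M)[[\lambda]]$ with $f*g=\sum_{r\ge0}\lambda^rM_r(f,g)$ for $f,g\in C^\infty(M)$, where the $M_r$ are local operators, $M_0(f,g)=fg$, $M_1(f,g)-M_1(g,f)=\mathrm i\{f,g\}$, $M_r$ vanishes on constants for $r\ge1$, and $\overline{f*g}=\bar g*\bar f$ ($\bar\lambda=\lambda$). For $f=\sum_r\lambda^rf_r$, $\operatorname{supp}f$ is the closure of $\bigcup_r\operatorname{supp}f_r$; $C^\infty_0(O)[[\lambda]]$ is the set of series all of whose coefficients have compact support in $O$. $\mathbb R[[\lambda]]$ is ordered by: $a>0$ iff its lowest-order nonzero coefficient is positive; $\omega$ is positive if $\omega(\bar f*f)\ge0$ for all $f$, and faithful if $\mathcal J_\omega=\{f:\omega(\bar f*f)=0\}=\{0\}$. The support of a $\mathbb C[[\lambda]]$-linear functional $\sigma$ on $C^\infty_0(M)[[\lambda]]$ is the complement of the union of all open $U$ with $\sigma|_{C^\infty_0(U)[[\lambda]]}=0$. $\psi_f$ is the class of $f$ in the GNS space $\mathfrak H_\omega=C^\infty_0(M)[[\lambda]]/\mathcal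 J_\omega$, and $\operatorname{supp}\psi_f:=\operatorname{supp}\omega_f$ with $\omega_f(g)=\omega(\bar f*g*f)$. *)

theory Defs
  imports "HOL-Analysis.Analysis"
begin

fun iter_dderiv :: "'a::real_normed_vector list \<Rightarrow> ('a \<Rightarrow> 'b::real_normed_vector) \<Rightarrow> 'a \<Rightarrow> 'b" where
  "iter_dderiv [] f = f"
| "iter_dderiv (v # vs) f = (\<lambda>x. frechet_derivative (iter_dderiv vs f) (at x) v)"

definition smooth_on :: "'a::real_normed_vector set \<Rightarrow> ('a \<Rightarrow> 'b::real_normed_vector) \<Rightarrow> bool" where
  "smooth_on S f \<longleftrightarrow>
     (\<forall>vs. (\<forall>x\<in>S. iter_dderiv vs f differentiable (at x)) \<and> continuous_on S (iter_dderiv vs f))"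

definition is_chart :: "'m::topological_space set \<Rightarrow> ('m \<Rightarrow> real^'n::finite) \<Rightarrow> bool" where
  "is_chart U \<phi> \<longleftrightarrow> open U \<and> open (\<phi> ` U) \<and> homeomorphism U (\<phi> ` U) \<phi> (inv_into U \<phi>)"

definition smooth_atlas :: "('m::topological_space set \<times> ('m \<Rightarrow> real^'n::finite)) set \<Rightarrow> bool" where
  "smooth_atlas A \<longleftrightarrow>
     (\<forall>(U,\<phi>)\<in>A. is_chart U \<phi>) \<and> (\<Union>p\<in>A. fst p) = UNIV \<and>
     (\<forall>(U,\<phi>)\<in>A. \<forall>(V,\<psi>)\<in>A. smooth_on (\<phi> ` (U \<inter> V)) (\<psi> \<circ> inv_into U \<phi>))"

definition smooth_fun :: "('m::topological_space set \<times> ('m \<Rightarrow> real^'n::finite)) set \<Rightarrow> ('m \<Rightarrow> complex) \<Rightarrow> bool" where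
  "smooth_fun A f \<longleftrightarrow> (\<forall>(U,\<phi>)\<in>A. smooth_on (\<phi> ` U) (f \<circ> inv_into U \<phi>))"

definition fsupp :: "('m::topological_space \<Rightarrow> complex) \<Rightarrow> 'm set" where
  "fsupp f = closure {x. f x \<noteq> 0}"

text \<open>A Poisson bracket on C^infinity(M) (complex-bilinear extension of a real Poisson bracket).\<close>
definition poisson_bracket ::
  "('m::topological_space set \<times> ('m \<Rightarrow> real^'n::finite)) set \<Rightarrow>
   (('m \<Rightarrow> complex) \<Rightarrow> ('m \<Rightarrow> complex) \<Rightarrow> ('m \<Rightarrow> complex)) \<Rightarrow> bool" where
  "poisson_bracket A pb \<longleftrightarrow>
     (\<forall>f g. smooth_fun A f \<and> smooth_fun A g \<longrightarrow> smooth_fun A (pb f g)) \<and>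
     (\<forall>a f g h. smooth_fun A f \<and> smooth_fun A g \<and> smooth_fun A h \<longrightarrow>
        pb (\<lambda>x. a * f x + g x) h = (\<lambda>x. a * pb f h x + pb g h x)) \<and>
     (\<forall>f g. smooth_fun A f \<and> smooth_fun A g \<longrightarrow> pb f g = (\<lambda>x. - pb g f x)) \<and>
     (\<forall>f g h. smooth_fun A f \<and> smooth_fun A g \<and> smooth_fun A h \<longrightarrow>
        pb f (\<lambda>x. g x * h x) = (\<lambda>x. pb f g x * h x + g x * pb f h x)) \<and>
     (\<forall>f g h. smooth_fun A f \<and> smooth_fun A g \<and> smooth_fun A h \<longrightarrow>
        (\<lambda>x. pb f (pb g h) x + pb g (pb h f) x + pb h (pb f g) x) = (\<lambda>x. 0)) \<and>
     (\<forall>f g. smooth_fun A f \<and> smooth_fun A g \<longrightarrow>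
        pb (\<lambda>x. cnj (f x)) (\<lambda>x. cnj (g x)) = (\<lambda>x. cnj (pb f g x)))"

text \<open>Elements of C^infinity(M)[[lambda]] are coefficient sequences nat => ('m => complex);
  elements of C[[lambda]] are coefficient sequences nat => complex.\<close>

definition smooth_series :: "('m::topological_space set \<times> ('m \<Rightarrow> real^'n::finite)) set \<Rightarrow> (nat \<Rightarrow> 'm \<Rightarrow> complex) \<Rightarrow> bool" where
  "smooth_series A F \<longleftrightarrow> (\<forall>n. smooth_fun A (F n))"

definition star :: "(nat \<Rightarrow> ('m \<Rightarrow> complex) \<Rightarrow> ('m \<Rightarrow> complex) \<Rightarrow> ('m \<Rightarrow> complex)) \<Rightarrow>
    (nat \<Rightarrow> 'm \<Rightarrow> complex) \<Rightarrow> (nat \<Rightarrow> 'm \<Rightarrow> complex) \<Rightarrow> (nat \<Rightarrow> 'm \<Rightarrow> complex)" where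
  "star Mr F G = (\<lambda>n x. \<Sum>r\<le>n. \<Sum>i\<le>n - r. Mr r (F i) (G (n - r - i)) x)"

definition sconj :: "(nat \<Rightarrow> 'm \<Rightarrow> complex) \<Rightarrow> (nat \<Rightarrow> 'm \<Rightarrow> complex)" where
  "sconj F = (\<lambda>n x. cnj (F n x))"

definition sadd :: "(nat \<Rightarrow> 'm \<Rightarrow> complex) \<Rightarrow> (nat \<Rightarrow> 'm \<Rightarrow> complex) \<Rightarrow> (nat \<Rightarrow> 'm \<Rightarrow> complex)" where
  "sadd F G = (\<lambda>n x. F n x + G n x)"

definition smul :: "(nat \<Rightarrow> complex) \<Rightarrow> (nat \<Rightarrow> 'm \<Rightarrow> complex) \<Rightarrow> (nat \<Rightarrow> 'm \<Rightarrow> complex)" where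
  "smul a F = (\<lambda>n x. \<Sum>k\<le>n. a k * F (n - k) x)"

definition cmul :: "(nat \<Rightarrow> complex) \<Rightarrow> (nat \<Rightarrow> complex) \<Rightarrow> (nat \<Rightarrow> complex)" where
  "cmul a b = (\<lambda>n. \<Sum>k\<le>n. a k * b (n - k))"

definition local_star_product ::
  "('m::topological_space set \<times> ('m \<Rightarrow> real^'n::finite)) set \<Rightarrow>
   (('m \<Rightarrow> complex) \<Rightarrow> ('m \<Rightarrow> complex) \<Rightarrow> ('m \<Rightarrow> complex)) \<Rightarrow>
   (nat \<Rightarrow> ('m \<Rightarrow> complex) \<Rightarrow> ('m \<Rightarrow> complex) \<Rightarrow> ('m \<Rightarrow> complex)) \<Rightarrow> bool" where
  "local_star_product A pb Mr \<longleftrightarrow>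
     (\<forall>r f g. smooth_fun A f \<and> smooth_fun A g \<longrightarrow> smooth_fun A (Mr r f g)) \<and>
     (\<forall>r a f g h. smooth_fun A f \<and> smooth_fun A g \<and> smooth_fun A h \<longrightarrow>
        Mr r (\<lambda>x. a * f x + g x) h = (\<lambda>x. a * Mr r f h x + Mr r g h x) \<and>
        Mr r h (\<lambda>x. a * f x + g x) = (\<lambda>x. a * Mr r h f x + Mr r h g x)) \<and>
     (\<forall>r f g. smooth_fun A f \<and> smooth_fun A g \<longrightarrow> fsupp (Mr r f g) \<subseteq> fsupp f \<inter> fsupp g) \<and>
     (\<forall>f g. smooth_fun A f \<and> smooth_fun A g \<longrightarrow> Mr 0 f g = (\<lambda>x. f x * g x)) \<and>
     (\<forall>f g. smooth_fun A f \<and> smooth_fun A g \<longrightarrow>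
        (\<lambda>x. Mr 1 f g x - Mr 1 g f x) = (\<lambda>x. \<i> * pb f g x)) \<and>
     (\<forall>r c f. r \<ge> 1 \<and> smooth_fun A f \<longrightarrow> Mr r (\<lambda>_. c) f = (\<lambda>_. 0) \<and> Mr r f (\<lambda>_. c) = (\<lambda>_. 0)) \<and>
     (\<forall>r f g. smooth_fun A f \<and> smooth_fun A g \<longrightarrow>
        (\<lambda>x. cnj (Mr r f g x)) = Mr r (\<lambda>x. cnj (g x)) (\<lambda>x. cnj (f x))) \<and>
     (\<forall>F G H. smooth_series A F \<and> smooth_series A G \<and> smooth_series A H \<longrightarrow>
        star Mr (star Mr F G) H = star Mr F (star Mr G H))"

definition compact_series_in ::
  "('m::topological_space set \<times> ('m \<Rightarrow> real^'n::finite)) set \<Rightarrow> 'm set \<Rightarrow> (nat \<Rightarrow> 'm \<Rightarrow> complex) \<Rightarrow> bool" where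
  "compact_series_in A W F \<longleftrightarrow> (\<forall>n. smooth_fun A (F n) \<and> compact (fsupp (F n)) \<and> fsupp (F n) \<subseteq> W)"

definition ssupp :: "(nat \<Rightarrow> 'm::topological_space \<Rightarrow> complex) \<Rightarrow> 'm set" where
  "ssupp F = closure (\<Union>n. {x. F n x \<noteq> 0})"

text \<open>Order on R[[lambda]] inside C[[lambda]]: real coefficients, zero or lowest nonzero coefficient positive.\<close>
definition fps_nonneg :: "(nat \<Rightarrow> complex) \<Rightarrow> bool" where
  "fps_nonneg a \<longleftrightarrow> (\<forall>n. Im (a n) = 0) \<and> (a = (\<lambda>_. 0) \<or> Re (a (LEAST n. a n \<noteq> 0)) > 0)"

definition lambda_linear ::
  "('m::topological_space set \<times> ('m \<Rightarrow> real^'n::finite)) set \<Rightarrow> ((nat \<Rightarrow> 'm \<Rightarrow> complex) \<Rightarrow> (nat \<Rightarrow> complex)) \<Rightarrow> bool" where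
  "lambda_linear A \<omega> \<longleftrightarrow>
     (\<forall>F G. compact_series_in A UNIV F \<and> compact_series_in A UNIV G \<longrightarrow>
        \<omega> (sadd F G) = (\<lambda>n. \<omega> F n + \<omega> G n)) \<and>
     (\<forall>a F. compact_series_in A UNIV F \<longrightarrow> \<omega> (smul a F) = cmul a (\<omega> F))"

definition positive_functional where
  "positive_functional A Mr \<omega> \<longleftrightarrow>
     (\<forall>F. compact_series_in A UNIV F \<longrightarrow> fps_nonneg (\<omega> (star Mr (sconj F) F)))"

definition faithful_functional where
  "faithful_functional A Mr \<omega> \<longleftrightarrow>
     (\<forall>F. compact_series_in A UNIV F \<and> \<omega> (star Mr (sconj F) F) = (\<lambda>_. 0) \<longrightarrow> F = (\<lambda>_ _. 0))"

definition functional_supp ::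
  "('m::topological_space set \<times> ('m \<Rightarrow> real^'n::finite)) set \<Rightarrow> ((nat \<Rightarrow> 'm \<Rightarrow> complex) \<Rightarrow> (nat \<Rightarrow> complex)) \<Rightarrow> 'm set" where
  "functional_supp A \<sigma> = - \<Union>{U. open U \<and> (\<forall>F. compact_series_in A U F \<longrightarrow> \<sigma> F = (\<lambda>_. 0))}"

text \<open>supp psi_f := supp omega_f, omega_f(g) = omega(conj f * g * f).\<close>
definition gns_vector_supp where
  "gns_vector_supp A Mr \<omega> F = functional_supp A (\<lambda>G. \<omega> (star Mr (star Mr (sconj F) G) F))"

end

theory Submission
  imports Defs
begin

definition Ck :: "nat \<Rightarrow> 'a::real_normed_vector set \<Rightarrow> ('a \<Rightarrow> 'b::real_normed_vector) \<Rightarrow> bool" where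
 "Ck n S f \<longleftrightarrow> (\<forall>vs. length vs \<le> n \<longrightarrow> (\<forall>x\<in>S. iter_dderiv vs f differentiable (at x)) \<and> continuous_on S (iter_dderiv vs f))"

lemma iter_append: "iter_dderiv (vs @ ws) f = iter_dderiv vs (iter_dderiv ws f)"
  by (induction vs) auto

lemma fd_local:
  assumes "open S" "x \<in> S" "\<And>y. y \<in> S \<Longrightarrow> f y = g y"
  shows "frechet_derivative f (at x) = frechet_derivative g (at x)"
proof -
  have "\<And>D. (f has_derivative D) (at x) \<longleftrightarrow> (g has_derivative D) (at x)"
    using has_derivative_transform_within_open assms by metis
  thus ?thesis unfolding frechet_derivative_def by simp
qed

lemma iter_local:
  assumes "open S" "\<And>x. x\<in>S \<Longrightarrow> f x = g x" "x \<in> S"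
  shows "iter_dderiv vs f x = iter_dderiv vs g x"
  using assms(3)
proof (induction vs arbitrary: x)
  case Nil
  then show ?case using assms by simp
next
  case (Cons v vs)
  have "frechet_derivative (iter_dderiv vs f) (at x) = frechet_derivative (iter_dderiv vs g) (at x)"
    by (rule fd_local[OF assms(1) Cons.prems]) (use Cons.IH in auto)
  then show ?case by simp
qed

lemma Ck_0: "Ck 0 S f \<longleftrightarrow> (\<forall>x\<in>S. f differentiable (at x)) \<and> continuous_on S f"
  unfolding Ck_def by auto

lemma Ck_mono: "m \<le> n \<Longrightarrow> Ck n S f \<Longrightarrow> Ck m S f"
  unfolding Ck_def by auto

lemma Ck_Suc: "Ck (Suc n) S f \<longleftrightarrow> Ck 0 S f \<and> (\<forall>v. Ck n S (iter_dderiv [v] f))"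
proof
  assume H: "Ck (Suc n) S f"
  have "Ck n S (iter_dderiv [v] f)" for v
    unfolding Ck_def
  proof (intro allI impI)
    fix vs :: "'a list" assume "length vs \<le> n"
    then have "length (vs @ [v]) \<le> Suc n" by simp
    then show "(\<forall>x\<in>S. iter_dderiv vs (iter_dderiv [v] f) differentiable at x) \<and>
         continuous_on S (iter_dderiv vs (iter_dderiv [v] f))"
      using H unfolding Ck_def iter_append[symmetric] by blast
  qed
  then show "Ck 0 S f \<and> (\<forall>v. Ck n S (iter_dderiv [v] f))" using Ck_mono[OF _ H] by auto
next
  assume H: "Ck 0 S f \<and> (\<forall>v. Ck n S (iter_dderiv [v] f))"
  show "Ck (Suc n) S f" unfolding Ck_def
  proof (intro allI impI)
    fix vs :: "'a list" assume L: "length vs \<le> Suc n"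
    show "(\<forall>x\<in>S. iter_dderiv vs f differentiable at x) \<and> continuous_on S (iter_dderiv vs f)"
    proof (cases vs rule: rev_cases)
      case Nil
      then show ?thesis using H unfolding Ck_def by auto
    next
      case (snoc ws v)
      then have "length ws \<le> n" using L by simp
      then show ?thesis using H unfolding snoc iter_append Ck_def by blast
    qed
  qed
qed

lemma smooth_on_Ck: "smooth_on S f \<longleftrightarrow> (\<forall>n. Ck n S f)"
  unfolding smooth_on_def Ck_def by auto

lemma Ck_cong:
  assumes "open S" "\<And>x. x \<in> S \<Longrightarrow> f x = g x" "Ck n S f"
  shows "Ck n S g"
  unfolding Ck_def
proof (intro allI impI conjI)
  fix vs :: "'a list" assume L: "length vs \<le> n"
  have E: "iter_dderiv vs f x = iter_dderiv vs g x" if "x \<in> S" for x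
    by (rule iter_local[OF assms(1) assms(2) that])
  have F: "(\<forall>x\<in>S. iter_dderiv vs f differentiable at x) \<and> continuous_on S (iter_dderiv vs f)"
    using assms(3) L unfolding Ck_def by blast
  show "\<forall>x\<in>S. iter_dderiv vs g differentiable at x"
  proof
    fix x assume "x \<in> S"
    then have "iter_dderiv vs f differentiable at x" using F by blast
    then obtain D where "(iter_dderiv vs f has_derivative D) (at x)"
      unfolding differentiable_def by blast
    then have "(iter_dderiv vs g has_derivative D) (at x)"
      by (rule has_derivative_transform_within_open[OF _ assms(1) \<open>x\<in>S\<close>]) (rule E)
    then show "iter_dderiv vs g differentiable at x" unfolding differentiable_def by blast
  qed
  have "continuous_on S (iter_dderiv vs f) = continuous_on S (iter_dderiv vs g)"
    by (rule continuous_on_cong[OF refl E])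
  then show "continuous_on S (iter_dderiv vs g)" using F by blast
qed

lemma Ck_const: "Ck n S (\<lambda>x. c)"
proof (induction n arbitrary: c)
  case 0
  then show ?case unfolding Ck_0 by auto
next
  case (Suc n)
  have "iter_dderiv [v] (\<lambda>x. c) = (\<lambda>x. 0)" for v by (simp add: frechet_derivative_const)
  then show ?case unfolding Ck_Suc Ck_0 using Suc by auto
qed

lemma iter1: "iter_dderiv [v] f x = frechet_derivative f (at x) v" by simp

lemma Ck_diff: "Ck n S f \<Longrightarrow> x \<in> S \<Longrightarrow> (f has_derivative frechet_derivative f (at x)) (at x)"
  using Ck_mono[of 0 n S f] unfolding Ck_0 frechet_derivative_works[symmetric] by auto

lemma Ck_add:
  assumes "open S"
  shows "Ck n S f \<Longrightarrow> Ck n S g \<Longrightarrow> Ck n S (\<lambda>x. f x + g x)"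
proof (induction n arbitrary: f g)
  case 0
  then show ?case unfolding Ck_0 by (auto intro: continuous_on_add)
next
  case (Suc n)
  have C0: "Ck 0 S (\<lambda>x. f x + g x)" using Suc.prems unfolding Ck_Suc Ck_0 by (auto intro: continuous_on_add)
  have "Ck n S (iter_dderiv [v] (\<lambda>x. f x + g x))" for v
  proof (rule Ck_cong[OF assms])
    fix x assume "x \<in> S"
    have "((\<lambda>x. f x + g x) has_derivative (\<lambda>h. frechet_derivative f (at x) h + frechet_derivative g (at x) h)) (at x)"
      using Ck_diff[OF Suc.prems(1) \<open>x\<in>S\<close>] Ck_diff[OF Suc.prems(2) \<open>x\<in>S\<close>] by (rule has_derivative_add)
    note D = this
    then show "iter_dderiv [v] f x + iter_dderiv [v] g x = iter_dderiv [v] (\<lambda>x. f x + g x) x"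
      by (simp add: frechet_derivative_at[OF D, symmetric])
  next
    show "Ck n S (\<lambda>x. iter_dderiv [v] f x + iter_dderiv [v] g x)"
      using Suc unfolding Ck_Suc by blast
  qed
  then show ?case using C0 unfolding Ck_Suc by blast
qed

lemma Ck_linear:
  assumes "open S" "bounded_linear L"
  shows "Ck n S f \<Longrightarrow> Ck n S (\<lambda>x. L (f x))"
proof (induction n arbitrary: f)
  case 0
  then show ?case unfolding Ck_0
    using bounded_linear.has_derivative[OF assms(2)] bounded_linear.continuous_on[OF assms(2)]
    unfolding differentiable_def by blast
next
  case (Suc n)
  have C0: "Ck 0 S (\<lambda>x. L (f x))" using Suc.prems unfolding Ck_Suc Ck_0
    using bounded_linear.has_derivative[OF assms(2)] bounded_linear.continuous_on[OF assms(2)]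
    unfolding differentiable_def by blast
  have "Ck n S (iter_dderiv [v] (\<lambda>x. L (f x)))" for v
  proof (rule Ck_cong[OF assms(1)])
    fix x assume "x \<in> S"
    have "((\<lambda>x. L (f x)) has_derivative (\<lambda>h. L (frechet_derivative f (at x) h))) (at x)"
      using bounded_linear.has_derivative[OF assms(2) Ck_diff[OF Suc.prems(1) \<open>x\<in>S\<close>]] .
    note D = this
    then show "L (iter_dderiv [v] f x) = iter_dderiv [v] (\<lambda>x. L (f x)) x"
      by (simp add: frechet_derivative_at[OF D, symmetric])
  next
    show "Ck n S (\<lambda>x. L (iter_dderiv [v] f x))"
      using Suc unfolding Ck_Suc by blast
  qed
  then show ?case using C0 unfolding Ck_Suc by blast
qed

lemma Ck_bilinear:
  assumes "open S" "bounded_bilinear B"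
  shows "Ck n S f \<Longrightarrow> Ck n S g \<Longrightarrow> Ck n S (\<lambda>x. B (f x) (g x))"
proof (induction n arbitrary: f g)
  case 0
  then show ?case unfolding Ck_0
    using bounded_bilinear.FDERIV[OF assms(2)] bounded_bilinear.continuous_on[OF assms(2)]
    unfolding differentiable_def by blast
next
  case (Suc n)
  have C0: "Ck 0 S (\<lambda>x. B (f x) (g x))" using Suc.prems unfolding Ck_Suc Ck_0
    using bounded_bilinear.FDERIV[OF assms(2)] bounded_bilinear.continuous_on[OF assms(2)]
    unfolding differentiable_def by blast
  have "Ck n S (iter_dderiv [v] (\<lambda>x. B (f x) (g x)))" for v
  proof (rule Ck_cong[OF assms(1)])
    fix x assume "x \<in> S"
    have "((\<lambda>x. B (f x) (g x)) has_derivative (\<lambda>h. B (f x) (frechet_derivative g (at x) h) + B (frechet_derivative f (at x) h) (g x))) (at x)"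
      using bounded_bilinear.FDERIV[OF assms(2) Ck_diff[OF Suc.prems(1) \<open>x\<in>S\<close>] Ck_diff[OF Suc.prems(2) \<open>x\<in>S\<close>]] .
    note D = this
    then show "B (f x) (iter_dderiv [v] g x) + B (iter_dderiv [v] f x) (g x) = iter_dderiv [v] (\<lambda>x. B (f x) (g x)) x"
      by (simp add: frechet_derivative_at[OF D, symmetric])
  next
    have "Ck n S f" "Ck n S g" using Suc.prems Ck_mono[of n "Suc n"] by auto
    then show "Ck n S (\<lambda>x. B (f x) (iter_dderiv [v] g x) + B (iter_dderiv [v] f x) (g x))"
      using Suc unfolding Ck_Suc by (intro Ck_add[OF assms(1)]) blast+
  qed
  then show ?case using C0 unfolding Ck_Suc by blast
qed

lemma Ck_sum:
  assumes "open S" "finite I"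
  shows "(\<And>i. i \<in> I \<Longrightarrow> Ck n S (f i)) \<Longrightarrow> Ck n S (\<lambda>x. \<Sum>i\<in>I. f i x)"
  using assms(2)
proof (induction I rule: finite_induct)
  case empty
  then show ?case using Ck_const by simp
next
  case (insert a I)
  then show ?case by (simp add: Ck_add[OF assms(1)])
qed

lemma linear_basis_expand:
  fixes L :: "'c::euclidean_space \<Rightarrow> 'b::real_normed_vector"
  assumes "linear L"
  shows "L w = (\<Sum>b\<in>Basis. (w \<bullet> b) *\<^sub>R L b)"
proof -
  have "L w = L (\<Sum>b\<in>Basis. (w \<bullet> b) *\<^sub>R b)" by (simp add: euclidean_representation)
  also have "\<dots> = (\<Sum>b\<in>Basis. (w \<bullet> b) *\<^sub>R L b)"
    by (simp add: linear_sum[OF assms] linear_scale[OF assms])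
  finally show ?thesis .
qed

lemma Ck_compose:
  fixes T :: "'a::real_normed_vector \<Rightarrow> 'c::euclidean_space" and \<beta> :: "'c \<Rightarrow> 'b::real_normed_vector"
  assumes "open S"
  shows "(\<forall>m. Ck m UNIV \<beta>) \<Longrightarrow> Ck n S T \<Longrightarrow> Ck n S (\<lambda>x. \<beta> (T x))"
proof (induction n arbitrary: \<beta>)
  case 0
  have "continuous_on UNIV \<beta>" "\<forall>y. \<beta> differentiable at y" using 0(1)[rule_format, of 0] unfolding Ck_0 by auto
  then show ?case using 0 unfolding Ck_0
    using differentiable_chain_at[of T _ \<beta>] continuous_on_compose2[of UNIV \<beta> S T]
    by (auto simp: o_def)
next
  case (Suc n)
  have "continuous_on UNIV \<beta>" "\<forall>y. \<beta> differentiable at y" using Suc.prems(1)[rule_format, of 0] unfolding Ck_0 by auto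
  then have C0: "Ck 0 S (\<lambda>x. \<beta> (T x))" using Suc.prems Ck_mono[of 0 _ S T] unfolding Ck_0
    using differentiable_chain_at[of T _ \<beta>] continuous_on_compose2[of UNIV \<beta> S T]
    by (auto simp: o_def)
  have "Ck n S (iter_dderiv [v] (\<lambda>x. \<beta> (T x)))" for v
  proof (rule Ck_cong[OF assms(1)])
    fix x assume "x \<in> S"
    have dT: "(T has_derivative frechet_derivative T (at x)) (at x)" using Ck_diff[OF Suc.prems(2) \<open>x\<in>S\<close>] .
    have db: "(\<beta> has_derivative frechet_derivative \<beta> (at (T x))) (at (T x))"
      using Ck_diff[OF _ UNIV_I] Suc.prems(1) by blast
    have "((\<lambda>x. \<beta> (T x)) has_derivative (frechet_derivative \<beta> (at (T x)) \<circ> frechet_derivative T (at x))) (at x)"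
      using diff_chain_at[OF dT db] by (simp add: o_def)
    note D = this
    then have "iter_dderiv [v] (\<lambda>x. \<beta> (T x)) x = frechet_derivative \<beta> (at (T x)) (frechet_derivative T (at x) v)"
      by (simp add: frechet_derivative_at[OF D, symmetric])
    also have "\<dots> = (\<Sum>b\<in>Basis. (frechet_derivative T (at x) v \<bullet> b) *\<^sub>R frechet_derivative \<beta> (at (T x)) b)"
      by (rule linear_basis_expand) (use db in \<open>auto dest: has_derivative_linear\<close>)
    finally show "(\<Sum>b\<in>Basis. (iter_dderiv [v] T x \<bullet> b) *\<^sub>R iter_dderiv [b] \<beta> (T x)) = iter_dderiv [v] (\<lambda>x. \<beta> (T x)) x"
      by simp
  next
    have Tn: "Ck n S T" using Suc.prems Ck_mono[of n "Suc n"] by auto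
    have Tv: "Ck n S (iter_dderiv [v] T)" using Suc.prems unfolding Ck_Suc by blast
    have bb: "\<forall>m. Ck m UNIV (iter_dderiv [b] \<beta>)" for b
    proof
      fix m
      have "Ck (Suc m) UNIV \<beta>" using Suc.prems(1) by blast
      then show "Ck m UNIV (iter_dderiv [b] \<beta>)" unfolding Ck_Suc by blast
    qed
    show "Ck n S (\<lambda>x. \<Sum>b\<in>Basis. (iter_dderiv [v] T x \<bullet> b) *\<^sub>R iter_dderiv [b] \<beta> (T x))"
      apply (rule Ck_sum[OF assms(1) finite_Basis])
      apply (rule Ck_bilinear[OF assms(1) bounded_bilinear_scaleR])
       apply (rule Ck_linear[OF assms(1) bounded_linear_inner_left Tv])
      apply (rule Suc.IH[OF bb Tn])
      done
  qed
  then show ?case using C0 unfolding Ck_Suc by blast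
qed

definition Ef :: "nat \<Rightarrow> real \<Rightarrow> real" where
  "Ef k t = (if t > 0 then inverse t ^ k * exp (- inverse t) else 0)"

lemma Ef_deriv_pos:
  assumes "t > 0"
  shows "((\<lambda>s. inverse s ^ k * exp (- inverse s)) has_real_derivative
           (- real k * (inverse t ^ (k+1) * exp (- inverse t)) + inverse t ^ (k+2) * exp (- inverse t))) (at t)"
proof -
  have t0: "t \<noteq> 0" using assms by simp
  have d1: "((\<lambda>s. inverse s) has_real_derivative - (inverse t ^ Suc (Suc 0))) (at t)"
    by (rule DERIV_inverse[OF t0])
  have d2: "((\<lambda>s. inverse s ^ k) has_real_derivative (real k * inverse t ^ (k - Suc 0)) * (- (inverse t ^ Suc (Suc 0)))) (at t)"
    by (rule DERIV_chain2[OF DERIV_pow d1])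
  have d3: "((\<lambda>s. exp (- inverse s)) has_real_derivative exp (- inverse t) * (- (- (inverse t ^ Suc (Suc 0))))) (at t)"
    by (rule DERIV_chain2[OF DERIV_exp DERIV_minus[OF d1]])
  note d4 = DERIV_mult[OF d2 d3]
  show ?thesis
  proof (rule DERIV_cong[OF d4])
    show "(real k * inverse t ^ (k - Suc 0)) * (- (inverse t ^ Suc (Suc 0))) * exp (- inverse t) +
      exp (- inverse t) * (- (- (inverse t ^ Suc (Suc 0)))) * inverse t ^ k =
      (- real k * (inverse t ^ (k+1) * exp (- inverse t)) + inverse t ^ (k+2) * exp (- inverse t))"
    proof (cases k)
      case 0 then show ?thesis by (simp add: power2_eq_square)
    next
      case (Suc m) then show ?thesis by (simp add: power2_eq_square algebra_simps)
    qed
  qed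
qed

lemma Ef_right_lim: "((\<lambda>h. inverse h ^ Suc k * exp (- inverse h)) \<longlongrightarrow> 0) (at_right (0::real))"
proof -
  have "((\<lambda>x::real. x ^ Suc k / exp x) \<longlongrightarrow> 0) at_top" by (rule tendsto_power_div_exp_0)
  then have "((\<lambda>x::real. inverse (inverse x) ^ Suc k * exp (- inverse (inverse x))) \<longlongrightarrow> 0) at_top"
    by (simp add: exp_minus divide_inverse)
  then show ?thesis unfolding filterlim_at_right_to_top by simp
qed

lemma Ef_deriv: "(Ef k has_real_derivative (- real k * Ef (k+1) t + Ef (k+2) t)) (at t)"
proof (cases "t > 0")
  case True
  have "(Ef k has_real_derivative (- real k * (inverse t ^ (k+1) * exp (- inverse t)) + inverse t ^ (k+2) * exp (- inverse t))) (at t)"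
    by (rule has_field_derivative_transform_within_open[OF Ef_deriv_pos[OF True], of "{0<..}"])
       (use True in \<open>auto simp: Ef_def\<close>)
  then show ?thesis using True by (simp add: Ef_def)
next
  case False
  show ?thesis
  proof (cases "t < 0")
    case True
    have "(Ef k has_real_derivative 0) (at t)"
      by (rule has_field_derivative_transform_within_open[OF DERIV_const, of "{..<0}"])
         (use True in \<open>auto simp: Ef_def\<close>)
    then show ?thesis using True by (simp add: Ef_def)
  next
    case False2: False
    then have t0: "t = 0" using False by simp
    have L: "((\<lambda>h. Ef k h / h) \<longlongrightarrow> 0) (at_left 0)"
    proof (rule Lim_transform_eventually[OF tendsto_const])
      have "\<forall>\<^sub>F x in at_left (0::real). x \<in> {-1<..<0}" by (rule eventually_at_left_real) simp
      then show "\<forall>\<^sub>F x in at_left 0. 0 = Ef k x / x"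
        by eventually_elim (simp add: Ef_def)
    qed
    have R: "((\<lambda>h. Ef k h / h) \<longlongrightarrow> 0) (at_right 0)"
    proof (rule Lim_transform_eventually[OF Ef_right_lim[of k]])
      have "\<forall>\<^sub>F x in at_right (0::real). x > 0" by (simp add: eventually_at_right_less)
      then show "\<forall>\<^sub>F x in at_right 0. inverse x ^ Suc k * exp (- inverse x) = Ef k x / x"
        by eventually_elim (simp add: Ef_def divide_inverse)
    qed
    have "((\<lambda>h. Ef k h / h) \<longlongrightarrow> 0) (at 0)" using L R filterlim_at_split by blast
    then have "(Ef k has_real_derivative 0) (at 0)" unfolding DERIV_def by (simp add: Ef_def)
    then show ?thesis using t0 by (simp add: Ef_def)
  qed
qed

lemma Ef_iter: "iter_dderiv [v] (Ef k) = (\<lambda>t. v * (- real k * Ef (k+1) t + Ef (k+2) t))"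
proof
  fix t
  have "frechet_derivative (Ef k) (at t) = (\<lambda>h. (- real k * Ef (k+1) t + Ef (k+2) t) * h)"
    by (rule sym, rule frechet_derivative_at, rule has_field_derivative_imp_has_derivative[OF Ef_deriv])
  then show "iter_dderiv [v] (Ef k) t = v * (- real k * Ef (k+1) t + Ef (k+2) t)" by (simp add: mult.commute)
qed

lemma Ef_Ck: "Ck n UNIV (Ef k)"
proof (induction n arbitrary: k)
  case 0
  have "\<forall>x. Ef k differentiable at x" using Ef_deriv real_differentiable_def
    by (metis differentiable_def has_field_derivative_imp_has_derivative)
  moreover then have "continuous_on UNIV (Ef k)"
    by (simp add: continuous_at_imp_continuous_on differentiable_imp_continuous_within)
  ultimately show ?case unfolding Ck_0 by auto
next
  case (Suc n)
  have "Ck 0 UNIV (Ef k)" using Suc.IH Ck_mono by blast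
  moreover have "Ck n UNIV (iter_dderiv [v] (Ef k))" for v
    unfolding Ef_iter
    apply (rule Ck_linear[OF open_UNIV bounded_linear_mult_right])
    apply (rule Ck_add[OF open_UNIV])
     apply (rule Ck_linear[OF open_UNIV bounded_linear_mult_right Suc.IH])
    apply (rule Suc.IH)
    done
  ultimately show ?case unfolding Ck_Suc by blast
qed

lemma Ck_id: "Ck n S (\<lambda>x. x)"
proof (cases n)
  case 0 then show ?thesis by (simp add: Ck_0 continuous_on_id)
next
  case (Suc m)
  have "iter_dderiv [v] (\<lambda>x. x) = (\<lambda>x. v)" for v by simp
  then show ?thesis unfolding Suc Ck_Suc Ck_0 by (auto simp: Ck_const intro: continuous_on_id)
qed

definition bump :: "'a::euclidean_space \<Rightarrow> real \<Rightarrow> 'a \<Rightarrow> complex" where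
  "bump c r z = complex_of_real (Ef 0 (r^2 - (z - c) \<bullet> (z - c)))"

lemma bump_Ck: "Ck n UNIV (bump c r)"
proof -
  have q: "Ck m UNIV (\<lambda>z::'a. r^2 + - ((z + - c) \<bullet> (z + - c)))" for m
    apply (rule Ck_add[OF open_UNIV Ck_const])
    apply (rule Ck_linear[OF open_UNIV bounded_linear_minus[OF bounded_linear_ident]])
    apply (rule Ck_bilinear[OF open_UNIV bounded_bilinear_inner])
     apply (rule Ck_add[OF open_UNIV Ck_id Ck_const])
    apply (rule Ck_add[OF open_UNIV Ck_id Ck_const])
    done
  have "Ck n UNIV (\<lambda>z::'a. Ef 0 (r^2 + - ((z + - c) \<bullet> (z + - c))))"
    by (rule Ck_compose[OF open_UNIV _ q]) (use Ef_Ck in blast)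
  then have "Ck n UNIV (\<lambda>z::'a. complex_of_real (Ef 0 (r^2 + - ((z + - c) \<bullet> (z + - c)))))"
    by (rule Ck_linear[OF open_UNIV bounded_linear_of_real])
  then show ?thesis unfolding bump_def by simp
qed

lemma bump_nz: "bump c r z \<noteq> 0 \<Longrightarrow> r > 0 \<Longrightarrow> z \<in> ball c r"
proof -
  assume "bump c r z \<noteq> 0" "r > 0"
  then have "(z - c) \<bullet> (z - c) < r^2" unfolding bump_def Ef_def by (auto split: if_splits)
  then have "norm (z - c) ^ 2 < r^2" by (simp add: power2_norm_eq_inner)
  then have "norm (z - c) < r" using \<open>r > 0\<close> by (smt (verit) power_mono norm_ge_zero)
  then show ?thesis by (simp add: dist_norm norm_minus_commute)
qed

lemma bump_center: "r > 0 \<Longrightarrow> bump c r c \<noteq> 0"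
  unfolding bump_def Ef_def by simp

lemma atlas_chart:
  assumes "smooth_atlas A" "(U, \<phi>) \<in> A"
  shows "open U" "open (\<phi> ` U)" "homeomorphism U (\<phi> ` U) \<phi> (inv_into U \<phi>)"
  using assms unfolding smooth_atlas_def is_chart_def by auto

lemma chart_open_image:
  assumes "smooth_atlas A" "(U, \<phi>) \<in> A" "open W" "W \<subseteq> U"
  shows "open (\<phi> ` W)"
proof -
  have "openin (top_of_set U) W" using assms atlas_chart(1)[OF assms(1,2)] openin_open_eq by blast
  then have "openin (top_of_set (\<phi> ` U)) (\<phi> ` W)"
    by (rule homeomorphism_imp_open_map[OF atlas_chart(3)[OF assms(1,2)]])
  then show ?thesis using openin_open_eq[OF atlas_chart(2)[OF assms(1,2)]] by blast
qed

lemma sf_Ck: "smooth_fun A f \<longleftrightarrow> (\<forall>(U,\<phi>)\<in>A. \<forall>n. Ck n (\<phi> ` U) (\<lambda>z. f (inv_into U \<phi> z)))"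
  unfolding smooth_fun_def smooth_on_Ck by (simp add: o_def)

lemma sf_const: "smooth_fun A (\<lambda>_. c)"
  unfolding sf_Ck by (auto simp: Ck_const)

lemma sf_add:
  assumes "smooth_atlas A" "smooth_fun A f" "smooth_fun A g"
  shows "smooth_fun A (\<lambda>x. f x + g x)"
  unfolding sf_Ck
proof (clarify)
  fix U \<phi> n assume "(U, \<phi>) \<in> A"
  then show "Ck n (\<phi> ` U) (\<lambda>z. f (inv_into U \<phi> z) + g (inv_into U \<phi> z))"
    using assms(2,3) unfolding sf_Ck
    by (intro Ck_add[OF atlas_chart(2)[OF assms(1)]]) auto
qed

lemma sf_sum:
  assumes "smooth_atlas A" "finite I" "\<And>i. i \<in> I \<Longrightarrow> smooth_fun A (f i)"
  shows "smooth_fun A (\<lambda>x. \<Sum>i\<in>I. f i x)"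
  using assms(2,3)
proof (induction I rule: finite_induct)
  case empty then show ?case by (simp add: sf_const)
next
  case (insert a I) then show ?case by (simp add: sf_add[OF assms(1)])
qed

lemma sf_cnj:
  assumes "smooth_atlas A" "smooth_fun A f"
  shows "smooth_fun A (\<lambda>x. cnj (f x))"
  unfolding sf_Ck
proof (clarify)
  fix U \<phi> n assume "(U, \<phi>) \<in> A"
  then show "Ck n (\<phi> ` U) (\<lambda>z. cnj (f (inv_into U \<phi> z)))"
    using assms(2) unfolding sf_Ck
    by (intro Ck_linear[OF atlas_chart(2)[OF assms(1)] bounded_linear_cnj]) auto
qed

lemma fsupp_zero: "fsupp (\<lambda>_. 0) = {}" unfolding fsupp_def by simp

lemma in_fsupp: "f x \<noteq> 0 \<Longrightarrow> x \<in> fsupp f"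
  unfolding fsupp_def by (rule closure_subset[THEN subsetD]) simp

lemma fsupp_empty:
  assumes E: "fsupp f = {}"
  shows "f = (\<lambda>_. 0)"
proof (rule ext)
  fix x
  show "f x = 0"
  proof (rule ccontr)
    assume "f x \<noteq> 0"
    then have "x \<in> fsupp f" by (rule in_fsupp)
    then show False using E by simp
  qed
qed

lemma fsupp_closed: "closed (fsupp f)" unfolding fsupp_def by simp

lemma fsupp_cnj: "fsupp (\<lambda>x. cnj (f x)) = fsupp f" unfolding fsupp_def by simp

lemma fsupp_sum:
  assumes "closed C" "\<And>i. i \<in> I \<Longrightarrow> fsupp (f i) \<subseteq> C"
  shows "fsupp (\<lambda>x. \<Sum>i\<in>I. f i x) \<subseteq> C"
proof -
  have "{x. (\<Sum>i\<in>I. f i x) \<noteq> 0} \<subseteq> C"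
  proof
    fix x assume "x \<in> {x. (\<Sum>i\<in>I. f i x) \<noteq> 0}"
    then have ne: "(\<Sum>i\<in>I. f i x) \<noteq> 0" by simp
    have "\<exists>i\<in>I. f i x \<noteq> 0"
    proof (rule ccontr)
      assume "\<not> (\<exists>i\<in>I. f i x \<noteq> 0)"
      then have "(\<Sum>i\<in>I. f i x) = 0" by (intro sum.neutral) simp
      then show False using ne by simp
    qed
    then obtain i where i: "i \<in> I" "f i x \<noteq> 0" by blast
    have "x \<in> fsupp (f i)" using i(2) by (rule in_fsupp)
    then show "x \<in> C" using assms(2)[OF i(1)] by blast
  qed
  then show ?thesis unfolding fsupp_def by (rule closure_minimal) (rule assms(1))
qed

lemma lsp_smooth: "local_star_product A pb Mr \<Longrightarrow> smooth_fun A f \<Longrightarrow> smooth_fun A g \<Longrightarrow> smooth_fun A (Mr r f g)"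
  by (drule conjunct1[OF iffD1[OF local_star_product_def]]) blast

lemma lsp_supp: "local_star_product A pb Mr \<Longrightarrow> smooth_fun A f \<Longrightarrow> smooth_fun A g \<Longrightarrow> fsupp (Mr r f g) \<subseteq> fsupp f \<inter> fsupp g"
  by (drule conjunct2[THEN conjunct2, THEN conjunct1, OF iffD1[OF local_star_product_def]]) blast

lemma lsp_zero: "local_star_product A pb Mr \<Longrightarrow> smooth_fun A f \<Longrightarrow> smooth_fun A g \<Longrightarrow> Mr 0 f g = (\<lambda>x. f x * g x)"
  by (drule conjunct2[THEN conjunct2, THEN conjunct2, THEN conjunct1, OF iffD1[OF local_star_product_def]]) blast

lemma lsp_cnj: "local_star_product A pb Mr \<Longrightarrow> smooth_fun A f \<Longrightarrow> smooth_fun A g \<Longrightarrow>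
   cnj (Mr r f g x) = Mr r (\<lambda>x. cnj (g x)) (\<lambda>x. cnj (f x)) x"
  by (drule conjunct2[THEN conjunct2, THEN conjunct2, THEN conjunct2, THEN conjunct2, THEN conjunct2, THEN conjunct1, OF iffD1[OF local_star_product_def]]) metis

lemma lsp_assoc: "local_star_product A pb Mr \<Longrightarrow> smooth_series A F \<Longrightarrow> smooth_series A G \<Longrightarrow> smooth_series A H \<Longrightarrow>
   star Mr (star Mr F G) H = star Mr F (star Mr G H)"
  by (drule conjunct2[THEN conjunct2, THEN conjunct2, THEN conjunct2, THEN conjunct2, THEN conjunct2, THEN conjunct2, OF iffD1[OF local_star_product_def]]) blast

lemma Mr_disj:
  assumes "local_star_product A pb Mr" "smooth_fun A f" "smooth_fun A g" "fsupp f \<inter> fsupp g = {}"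
  shows "Mr r f g = (\<lambda>_. 0)"
  using lsp_supp[OF assms(1-3), of r] assms(4) fsupp_empty by blast

lemma star_smooth:
  assumes "smooth_atlas A" "local_star_product A pb Mr" "smooth_series A F" "smooth_series A G"
  shows "smooth_series A (star Mr F G)"
  unfolding smooth_series_def star_def
proof
  fix n
  show "smooth_fun A (\<lambda>x. \<Sum>r\<le>n. \<Sum>i\<le>n - r. Mr r (F i) (G (n - r - i)) x)"
    using assms unfolding smooth_series_def
    by (intro sf_sum[OF assms(1)] lsp_smooth[OF assms(2)]) auto
qed

lemma sconj_smooth: "smooth_atlas A \<Longrightarrow> smooth_series A F \<Longrightarrow> smooth_series A (sconj F)"
  unfolding smooth_series_def sconj_def using sf_cnj by blast

lemma star_supp_left:
  assumes "local_star_product A pb Mr" "smooth_series A F" "smooth_series A G" "closed C"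
     "\<And>i. fsupp (F i) \<subseteq> C"
  shows "fsupp (star Mr F G n) \<subseteq> C"
  unfolding star_def
  apply (rule fsupp_sum[OF assms(4)])
  apply (rule fsupp_sum[OF assms(4)])
  using lsp_supp[OF assms(1)] assms(2,3,5) unfolding smooth_series_def by blast

lemma star_supp_right:
  assumes "local_star_product A pb Mr" "smooth_series A F" "smooth_series A G" "closed C"
     "\<And>i. fsupp (G i) \<subseteq> C"
  shows "fsupp (star Mr F G n) \<subseteq> C"
  unfolding star_def
  apply (rule fsupp_sum[OF assms(4)])
  apply (rule fsupp_sum[OF assms(4)])
  using lsp_supp[OF assms(1)] assms(2,3,5) unfolding smooth_series_def by blast

lemma star_disj:
  assumes "local_star_product A pb Mr" "smooth_series A F" "smooth_series A G"
     "\<And>i j. fsupp (F i) \<inter> fsupp (G j) = {}"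
  shows "star Mr F G = (\<lambda>_ _. 0)"
  unfolding star_def
  using Mr_disj[OF assms(1)] assms(2-4) unfolding smooth_series_def by simp

lemma sum_rev_atMost: "(\<Sum>i\<le>m. g (m - i)) = (\<Sum>i\<le>(m::nat). g i)"
  using sum.atLeastAtMost_rev[of g 0 m] by (simp add: atMost_atLeast0)

lemma sconj_star:
  assumes "local_star_product A pb Mr" "smooth_series A F" "smooth_series A G"
  shows "sconj (star Mr F G) = star Mr (sconj G) (sconj F)"
proof (intro ext)
  fix n x
  have "sconj (star Mr F G) n x = (\<Sum>r\<le>n. \<Sum>i\<le>n - r. cnj (Mr r (F i) (G (n - r - i)) x))"
    unfolding sconj_def star_def by simp
  also have "\<dots> = (\<Sum>r\<le>n. \<Sum>i\<le>n - r. Mr r (sconj G (n - r - i)) (sconj F i) x)"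
    using lsp_cnj[OF assms(1)] assms(2,3) unfolding smooth_series_def sconj_def by simp
  also have "\<dots> = (\<Sum>r\<le>n. \<Sum>i\<le>n - r. Mr r (sconj G i) (sconj F (n - r - i)) x)"
  proof (rule sum.cong[OF refl])
    fix r assume "r \<in> {..n}"
    define m where "m = n - r"
    define g where "g = (\<lambda>i. Mr r (sconj G i) (sconj F (m - i)) x)"
    have "(\<Sum>i\<le>m. g (m - i)) = (\<Sum>i\<le>m. g i)" by (rule sum_rev_atMost)
    moreover have "(\<Sum>i\<le>m. g (m - i)) = (\<Sum>i\<le>m. Mr r (sconj G (m - i)) (sconj F i) x)"
    proof (rule sum.cong[OF refl])
      fix i assume "i \<in> {..m}"
      then have "m - (m - i) = i" by simp
      then show "g (m - i) = Mr r (sconj G (m - i)) (sconj F i) x" unfolding g_def by simp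
    qed
    ultimately show "(\<Sum>i\<le>n - r. Mr r (sconj G (n - r - i)) (sconj F i) x) = (\<Sum>i\<le>n - r. Mr r (sconj G i) (sconj F (n - r - i)) x)"
      unfolding m_def g_def by simp
  qed
  also have "\<dots> = star Mr (sconj G) (sconj F) n x" unfolding star_def by simp
  finally show "sconj (star Mr F G) n x = star Mr (sconj G) (sconj F) n x" .
qed

lemma Ck_open_Un:
  assumes "open S1" "open S2" "Ck n S1 f" "Ck n S2 f"
  shows "Ck n (S1 \<union> S2) f"
  using assms unfolding Ck_def by (auto intro: continuous_on_open_Un)

lemma sum_single:
  assumes "finite A" "a \<in> A" "\<And>i. i \<in> A \<Longrightarrow> i \<noteq> a \<Longrightarrow> f i = 0"
  shows "sum f A = f a"
proof -
  have "sum f A = f a + sum f (A - {a})" using assms(1,2) by (rule sum.remove)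
  moreover have "sum f (A - {a}) = 0" using assms(3) by (intro sum.neutral) auto
  ultimately show ?thesis by simp
qed

theorem lemma6:
  fixes A :: "('m::{t2_space, second_countable_topology} set \<times> ('m \<Rightarrow> real^'n::finite)) set"
    and pb :: "('m \<Rightarrow> complex) \<Rightarrow> ('m \<Rightarrow> complex) \<Rightarrow> ('m \<Rightarrow> complex)"
    and Mr :: "nat \<Rightarrow> ('m \<Rightarrow> complex) \<Rightarrow> ('m \<Rightarrow> complex) \<Rightarrow> ('m \<Rightarrow> complex)"
    and \<omega> :: "(nat \<Rightarrow> 'm \<Rightarrow> complex) \<Rightarrow> (nat \<Rightarrow> complex)"
    and F :: "nat \<Rightarrow> 'm \<Rightarrow> complex"
  assumes "smooth_atlas A"
    and "poisson_bracket A pb"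
    and "local_star_product A pb Mr"
    and "lambda_linear A \<omega>"
    and "positive_functional A Mr \<omega>"
    and "faithful_functional A Mr \<omega>"
    and "compact_series_in A UNIV F"
  shows "gns_vector_supp A Mr \<omega> F = ssupp F"
proof -
  note atlas = assms(1) and lsp = assms(3) and lin = assms(4) and faith = assms(6) and cF = assms(7)
  have Fs: "smooth_series A F" using cF unfolding compact_series_in_def smooth_series_def by blast
  define Z :: "nat \<Rightarrow> 'm \<Rightarrow> complex" where "Z = (\<lambda>_ _. 0)"
  have Zc: "compact_series_in A UNIV Z" unfolding compact_series_in_def Z_def by (simp add: sf_const fsupp_zero)
  have Zs: "smooth_series A Z" unfolding smooth_series_def Z_def by (simp add: sf_const)
  have wZ: "\<omega> Z = (\<lambda>_. 0)"
  proof -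
    have "smul (\<lambda>_. 0) Z = Z" unfolding smul_def Z_def by simp
    moreover have "\<omega> (smul (\<lambda>_. 0) Z) = cmul (\<lambda>_. 0) (\<omega> Z)"
      using lin[unfolded lambda_linear_def, THEN conjunct2, rule_format, OF Zc] .
    ultimately show ?thesis unfolding cmul_def by simp
  qed
  have sconjF: "\<And>i. sconj F i = (\<lambda>x. cnj (F i x))" unfolding sconj_def by simp
  have FinS: "\<And>i. fsupp (F i) \<subseteq> ssupp F"
    unfolding fsupp_def ssupp_def by (rule closure_mono) blast
  have Fsc: "smooth_series A (sconj F)" by (rule sconj_smooth[OF atlas Fs])
  have sub1: "gns_vector_supp A Mr \<omega> F \<subseteq> ssupp F"
  proof
    fix x assume xg: "x \<in> gns_vector_supp A Mr \<omega> F"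
    show "x \<in> ssupp F"
    proof (rule ccontr)
      assume xn: "x \<notin> ssupp F"
      define U where "U = - ssupp F"
      have oU: "open U" unfolding U_def ssupp_def by auto
      have vanish: "\<omega> (star Mr (star Mr (sconj F) G) F) = (\<lambda>_. 0)" if G: "compact_series_in A U G" for G
      proof -
        have Gs: "smooth_series A G" using G unfolding compact_series_in_def smooth_series_def by blast
        have "star Mr (sconj F) G = (\<lambda>_ _. 0)"
        proof (rule star_disj[OF lsp Fsc Gs])
          fix i j
          have "fsupp (sconj F i) \<subseteq> ssupp F" unfolding sconjF fsupp_cnj by (rule FinS)
          moreover have "fsupp (G j) \<subseteq> U" using G unfolding compact_series_in_def by blast
          ultimately show "fsupp (sconj F i) \<inter> fsupp (G j) = {}" unfolding U_def by blast
        qed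
        then have "star Mr (sconj F) G = Z" unfolding Z_def .
        moreover have "star Mr Z F = (\<lambda>_ _. 0)"
          by (rule star_disj[OF lsp Zs Fs]) (simp add: Z_def fsupp_zero)
        ultimately show ?thesis using wZ unfolding Z_def by simp
      qed
      have "x \<in> U" using xn unfolding U_def by simp
      then have "x \<in> \<Union>{U. open U \<and> (\<forall>G. compact_series_in A U G \<longrightarrow> \<omega> (star Mr (star Mr (sconj F) G) F) = (\<lambda>_. 0))}"
        using oU vanish by blast
      then show False using xg unfolding gns_vector_supp_def functional_supp_def by simp
    qed
  qed
  have key: "\<not> (open U \<and> x \<in> U \<and> (\<forall>G. compact_series_in A U G \<longrightarrow> \<omega> (star Mr (star Mr (sconj F) G) F) = (\<lambda>_. 0)))"
    if xs: "x \<in> ssupp F" for x U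
  proof
    assume "open U \<and> x \<in> U \<and> (\<forall>G. compact_series_in A U G \<longrightarrow> \<omega> (star Mr (star Mr (sconj F) G) F) = (\<lambda>_. 0))"
    then have oU: "open U" and xU: "x \<in> U"
      and HU: "\<And>G. compact_series_in A U G \<Longrightarrow> \<omega> (star Mr (star Mr (sconj F) G) F) = (\<lambda>_. 0)" by auto
    have "U \<inter> closure (\<Union>n. {y. F n y \<noteq> 0}) \<noteq> {}" using xs xU unfolding ssupp_def by blast
    then have "U \<inter> (\<Union>n. {y. F n y \<noteq> 0}) \<noteq> {}" using open_Int_closure_eq_empty[OF oU] by blast
    then have ex: "\<exists>n. \<exists>y\<in>U. F n y \<noteq> 0" by blast
    define n0 where "n0 = (LEAST n. \<exists>y\<in>U. F n y \<noteq> 0)"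
    have "\<exists>y\<in>U. F n0 y \<noteq> 0" unfolding n0_def using ex by (rule LeastI_ex)
    then obtain y where yU: "y \<in> U" and Fy: "F n0 y \<noteq> 0" by blast
    have below: "fsupp (F j) \<inter> U = {}" if "j < n0" for j
    proof -
      have "\<not> (\<exists>y\<in>U. F j y \<noteq> 0)" using not_less_Least[OF that[unfolded n0_def]] .
      then have "U \<inter> {y. F j y \<noteq> 0} = {}" by blast
      then have "U \<inter> closure {y. F j y \<noteq> 0} = {}" using open_Int_closure_eq_empty[OF oU] by blast
      then show ?thesis unfolding fsupp_def by blast
    qed
    have cover: "(\<Union>p\<in>A. fst p) = UNIV"
      using atlas[unfolded smooth_atlas_def, THEN conjunct2, THEN conjunct1] .
    then obtain p where "p \<in> A" "y \<in> fst p" by (metis UNIV_I UN_E)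
    then obtain V \<phi> where V\<phi>: "(V, \<phi>) \<in> A" "y \<in> V" by (metis prod.collapse)
    note oV = atlas_chart(1)[OF atlas V\<phi>(1)]
    note hom = atlas_chart(3)[OF atlas V\<phi>(1)]
    define W where "W = U \<inter> V"
    have oW: "open W" unfolding W_def using oU oV by blast
    have WV: "W \<subseteq> V" unfolding W_def by blast
    have WU: "W \<subseteq> U" unfolding W_def by blast
    have "open (\<phi> ` W)" by (rule chart_open_image[OF atlas V\<phi>(1) oW WV])
    moreover have "\<phi> y \<in> \<phi> ` W" using yU V\<phi>(2) unfolding W_def by blast
    ultimately obtain r where r: "r > 0" "cball (\<phi> y) r \<subseteq> \<phi> ` W"
      using open_contains_cball by blast
    have invl: "\<And>p. p \<in> V \<Longrightarrow> inv_into V \<phi> (\<phi> p) = p"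
      using homeomorphism_apply1[OF hom] by blast
    define K where "K = inv_into V \<phi> ` cball (\<phi> y) r"
    have "cball (\<phi> y) r \<subseteq> \<phi> ` V" using r(2) WV by blast
    then have cK: "compact K" unfolding K_def
      by (intro compact_continuous_image continuous_on_subset[OF homeomorphism_cont2[OF hom]] compact_cball)
    have KW: "K \<subseteq> W"
    proof
      fix q assume "q \<in> K"
      then obtain z where z: "z \<in> cball (\<phi> y) r" "q = inv_into V \<phi> z" unfolding K_def by blast
      then obtain w where "w \<in> W" "z = \<phi> w" using r(2) by blast
      then show "q \<in> W" using z(2) invl WV by auto
    qed
    define b where "b = (\<lambda>p. if p \<in> V then bump (\<phi> y) r (\<phi> p) else 0)"
    have bK: "{p. b p \<noteq> 0} \<subseteq> K"
    proof
      fix p assume "p \<in> {p. b p \<noteq> 0}"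
      then have pV: "p \<in> V" and "bump (\<phi> y) r (\<phi> p) \<noteq> 0" unfolding b_def by (auto split: if_splits)
      then have "\<phi> p \<in> ball (\<phi> y) r" using bump_nz r(1) by blast
      then have "\<phi> p \<in> cball (\<phi> y) r" by auto
      then have "inv_into V \<phi> (\<phi> p) \<in> K" unfolding K_def by blast
      then show "p \<in> K" using invl[OF pV] by simp
    qed
    have fbK: "fsupp b \<subseteq> K" unfolding fsupp_def by (rule closure_minimal[OF bK compact_imp_closed[OF cK]])
    have fbU: "fsupp b \<subseteq> U" using fbK KW WU by blast
    have cfb: "compact (fsupp b)"
    proof -
      have "fsupp b = fsupp b \<inter> K" using fbK by blast
      then show ?thesis using closed_Int_compact[OF fsupp_closed cK] by metis
    qed
    have by0: "b y \<noteq> 0" using V\<phi>(2) bump_center[OF r(1)] by (simp add: b_def)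
    have trans: "\<forall>(U,\<phi>)\<in>A. \<forall>(V,\<psi>)\<in>A. smooth_on (\<phi> ` (U \<inter> V)) (\<psi> \<circ> inv_into U \<phi>)"
      using atlas[unfolded smooth_atlas_def, THEN conjunct2, THEN conjunct2] .
    have bs: "smooth_fun A b"
      unfolding sf_Ck
    proof (clarify)
      fix V' \<psi> n assume V'A: "(V', \<psi>) \<in> A"
      note hom' = atlas_chart(3)[OF atlas V'A]
      note oV' = atlas_chart(1)[OF atlas V'A]
      define S1 where "S1 = \<psi> ` (V' \<inter> V)"
      define S2 where "S2 = \<psi> ` (V' - K)"
      have oS1: "open S1" unfolding S1_def
        by (rule chart_open_image[OF atlas V'A]) (use oV oV' in auto)
      have oS2: "open S2" unfolding S2_def
        by (rule chart_open_image[OF atlas V'A]) (use oV' compact_imp_closed[OF cK] in auto)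
      have un: "\<psi> ` V' = S1 \<union> S2" unfolding S1_def S2_def using KW WV by blast
      have invl': "\<And>p. p \<in> V' \<Longrightarrow> inv_into V' \<psi> (\<psi> p) = p"
        using homeomorphism_apply1[OF hom'] by blast
      have "smooth_on (\<psi> ` (V' \<inter> V)) (\<phi> \<circ> inv_into V' \<psi>)"
        using trans V'A V\<phi>(1) by fastforce
      then have T: "Ck n S1 (\<lambda>z. \<phi> (inv_into V' \<psi> z))" unfolding S1_def smooth_on_Ck by (simp add: o_def)
      have C1: "Ck n S1 (\<lambda>z. b (inv_into V' \<psi> z))"
      proof (rule Ck_cong[OF oS1 _ Ck_compose[OF oS1 _ T]])
        show "\<forall>m. Ck m UNIV (bump (\<phi> y) r)" using bump_Ck by blast
      next
        fix z assume "z \<in> S1"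
        then obtain p where p: "p \<in> V'" "p \<in> V" "z = \<psi> p" unfolding S1_def by blast
        then show "bump (\<phi> y) r (\<phi> (inv_into V' \<psi> z)) = b (inv_into V' \<psi> z)"
          using invl' unfolding b_def by simp
      qed
      have C2: "Ck n S2 (\<lambda>z. b (inv_into V' \<psi> z))"
      proof (rule Ck_cong[OF oS2 _ Ck_const[of n S2 0]])
        fix z assume "z \<in> S2"
        then obtain p where p: "p \<in> V'" "p \<notin> K" "z = \<psi> p" unfolding S2_def by blast
        then have "b p = 0" using bK by blast
        then show "0 = b (inv_into V' \<psi> z)" using p invl' by simp
      qed
      show "Ck n (\<psi> ` V') (\<lambda>z. b (inv_into V' \<psi> z))" unfolding un by (rule Ck_open_Un[OF oS1 oS2 C1 C2])
    qed
    define H :: "nat \<Rightarrow> 'm \<Rightarrow> complex" where "H = (\<lambda>k. if k = 0 then b else (\<lambda>_. 0))"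
    have Hs: "smooth_series A H" unfolding smooth_series_def H_def using bs by (simp add: sf_const)
    have Hsupp: "fsupp (H k) \<subseteq> fsupp b" for k unfolding H_def by (simp add: fsupp_zero)
    have Hsc: "smooth_series A (sconj H)" by (rule sconj_smooth[OF atlas Hs])
    have Hscsupp: "fsupp (sconj H k) \<subseteq> fsupp b" for k
    proof -
      have "sconj H k = (\<lambda>x. cnj (H k x))" unfolding sconj_def by simp
      then show ?thesis using Hsupp[of k] by (simp add: fsupp_cnj)
    qed
    have compact_sub: "compact (fsupp f)" if "fsupp f \<subseteq> fsupp b" for f :: "'m \<Rightarrow> complex"
    proof -
      have "fsupp f = fsupp f \<inter> fsupp b" using that by blast
      then show ?thesis using closed_Int_compact[OF fsupp_closed cfb] by metis
    qed
    define P where "P = star Mr H F"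
    have Ps: "smooth_series A P" unfolding P_def by (rule star_smooth[OF atlas lsp Hs Fs])
    have Psupp: "fsupp (P m) \<subseteq> fsupp b" for m
      unfolding P_def by (rule star_supp_left[OF lsp Hs Fs fsupp_closed Hsupp])
    have Pc: "compact_series_in A UNIV P"
      unfolding compact_series_in_def using Ps Psupp compact_sub unfolding smooth_series_def by blast
    have zero_term: "Mr r (H i) (F (n0 - r - i)) = (\<lambda>_. 0)" if "r \<le> n0" "i \<le> n0 - r" "r \<noteq> 0 \<or> i \<noteq> 0" for r i
    proof (rule Mr_disj[OF lsp])
      show "smooth_fun A (H i)" using Hs unfolding smooth_series_def by blast
      show "smooth_fun A (F (n0 - r - i))" using Fs unfolding smooth_series_def by blast
      show "fsupp (H i) \<inter> fsupp (F (n0 - r - i)) = {}"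
      proof (cases "i = 0")
        case True
        then have "r \<noteq> 0" using that by blast
        then have "n0 - r - i < n0" using that True by simp
        then have "fsupp (F (n0 - r - i)) \<inter> U = {}" by (rule below)
        then show ?thesis using fbU True unfolding H_def by auto
      next
        case False
        then show ?thesis unfolding H_def by (simp add: fsupp_zero)
      qed
    qed
    have Pn0: "P n0 y = b y * F n0 y"
    proof -
      have "P n0 y = (\<Sum>r\<le>n0. \<Sum>i\<le>n0 - r. Mr r (H i) (F (n0 - r - i)) y)" unfolding P_def star_def by simp
      also have "\<dots> = (\<Sum>i\<le>n0 - 0. Mr 0 (H i) (F (n0 - 0 - i)) y)"
      proof (rule sum_single)
        fix r assume r: "r \<in> {..n0}" "r \<noteq> 0"
        show "(\<Sum>i\<le>n0 - r. Mr r (H i) (F (n0 - r - i)) y) = 0"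
        proof (rule sum.neutral, rule ballI)
          fix i assume "i \<in> {..n0 - r}"
          then show "Mr r (H i) (F (n0 - r - i)) y = 0" using zero_term[of r i] r by simp
        qed
      qed auto
      also have "\<dots> = Mr 0 (H 0) (F (n0 - 0 - 0)) y"
      proof (rule sum_single)
        fix i assume i: "i \<in> {..n0 - 0}" "i \<noteq> 0"
        then show "Mr 0 (H i) (F (n0 - 0 - i)) y = 0" using zero_term[of 0 i] by simp
      qed auto
      also have "\<dots> = b y * F n0 y"
        using lsp_zero[OF lsp bs, of "F n0"] Fs unfolding smooth_series_def H_def by simp
      finally show ?thesis .
    qed
    have nz: "\<omega> (star Mr (sconj P) P) \<noteq> (\<lambda>_. 0)"
    proof
      assume "\<omega> (star Mr (sconj P) P) = (\<lambda>_. 0)"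
      then have "P = (\<lambda>_ _. 0)" using faith Pc unfolding faithful_functional_def by blast
      then show False using Pn0 by0 Fy by simp
    qed
    define G where "G = star Mr (sconj H) H"
    have Gs: "smooth_series A G" unfolding G_def by (rule star_smooth[OF atlas lsp Hsc Hs])
    have Gsupp: "fsupp (G m) \<subseteq> fsupp b" for m
      unfolding G_def by (rule star_supp_right[OF lsp Hsc Hs fsupp_closed Hsupp])
    have Gc: "compact_series_in A U G"
      unfolding compact_series_in_def using Gs Gsupp compact_sub fbU unfolding smooth_series_def by blast
    have "\<omega> (star Mr (star Mr (sconj F) G) F) = (\<lambda>_. 0)" by (rule HU[OF Gc])
    moreover have "star Mr (sconj P) P = star Mr (star Mr (sconj F) G) F"
    proof -
      have sP: "sconj P = star Mr (sconj F) (sconj H)" unfolding P_def by (rule sconj_star[OF lsp Hs Fs])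
      have X: "smooth_series A (star Mr (sconj F) (sconj H))" by (rule star_smooth[OF atlas lsp Fsc Hsc])
      have "star Mr (sconj P) P = star Mr (star Mr (sconj F) (sconj H)) (star Mr H F)" by (subst sP) (simp add: P_def)
      also have "\<dots> = star Mr (star Mr (star Mr (sconj F) (sconj H)) H) F" by (rule lsp_assoc[OF lsp X Hs Fs, symmetric])
      also have "star Mr (star Mr (sconj F) (sconj H)) H = star Mr (sconj F) (star Mr (sconj H) H)"
        by (rule lsp_assoc[OF lsp Fsc Hsc Hs])
      finally show ?thesis unfolding G_def .
    qed
    ultimately show False using nz by simp
  qed
  have sub2: "ssupp F \<subseteq> gns_vector_supp A Mr \<omega> F"
  proof
    fix x assume xs: "x \<in> ssupp F"
    show "x \<in> gns_vector_supp A Mr \<omega> F"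
      unfolding gns_vector_supp_def functional_supp_def using key[OF xs] by blast
  qed
  show ?thesis using sub1 sub2 by blast
qed

end
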